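(* Let $0<i_1<i_2<\cdots<i_L$ be integers and $\mathcal S=\{x_0,x_{i_1},\ldots,x_{i_L}\}$, with corresponding restricted right-arm rotation distance $d_{RRA}^{\mathcal S}$. Then for every integer $n>i_L+4$ there exist finite rooted binary trees $T_1,T_2$, each with $n$ nodes, such that $d_{RRA}^{\mathcal S}(T_1,T_2)$ is defined and $d_{RRA}^{\mathcal S}(T_1,T_2)\ge 4n-4i_L-4$.
   Context: Trees: finite rooted binary trees, each internal vertex (node) having a left and a right child. The right arm consists of the root and all nodes reachable from the root by a path of right edges; the level of a node is its distance from the root. Right rotation at a node $N$ whose left child $M$ is a node (with $A,B$ the subtrees of $M$, $C$ the right subtree of $N$) replaces the subtree at $N$ by one whose root has left subtree $A$ and right child a node with left subtree $B$ and right subtree $C$; left rotation at $N$ is the inverse. Rotations preserve the number of nodes. $d_{RRA}^{\mathcal S}(T_1,T_2)$ is the minimal number of rotations, each at a right-arm node at one of the levels $0,i_1,\ldots,i_L$, required to transform $T_1$ into $T_2$; it is defined when such a sequence exists. *)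

theory Defs
  imports Main
begin

datatype bintree = Leaf | Node bintree bintree

fun nodes :: "bintree \<Rightarrow> nat" where
  "nodes Leaf = 0"
| "nodes (Node l r) = Suc (nodes l + nodes r)"

fun rot_right :: "bintree \<Rightarrow> bintree option" where
  "rot_right (Node (Node A B) C) = Some (Node A (Node B C))"
| "rot_right _ = None"

fun rot_left :: "bintree \<Rightarrow> bintree option" where
  "rot_left (Node A (Node B C)) = Some (Node (Node A B) C)"
| "rot_left _ = None"

fun at_arm :: "nat \<Rightarrow> (bintree \<Rightarrow> bintree option) \<Rightarrow> bintree \<Rightarrow> bintree option" where
  "at_arm 0 f t = f t"
| "at_arm (Suc k) f (Node l r) = map_option (Node l) (at_arm k f r)"
| "at_arm (Suc k) f Leaf = None"

definition rra_step :: "nat set \<Rightarrow> bintree \<Rightarrow> bintree \<Rightarrow> bool" where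
  "rra_step S t t' \<longleftrightarrow>
     (\<exists>k\<in>S. at_arm k rot_right t = Some t' \<or> at_arm k rot_left t = Some t')"

definition rra_defined :: "nat set \<Rightarrow> bintree \<Rightarrow> bintree \<Rightarrow> bool" where
  "rra_defined S T1 T2 \<longleftrightarrow> (\<exists>m. (rra_step S ^^ m) T1 T2)"

definition d_RRA :: "nat set \<Rightarrow> bintree \<Rightarrow> bintree \<Rightarrow> nat" where
  "d_RRA S T1 T2 = (LEAST m. (rra_step S ^^ m) T1 T2)"

end

theory Submission
  imports Defs
begin


definition sh :: "int \<Rightarrow> (int \<times> bool) list \<Rightarrow> (int \<times> bool) list" where
  "sh c xs = map (\<lambda>(v,f). (v + c, f)) xs"

lemma sh_append[simp]: "sh c (xs @ ys) = sh c xs @ sh c ys"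
  by (simp add: sh_def)
lemma sh_Cons[simp]: "sh c ((v,f) # xs) = (v + c, f) # sh c xs"
  by (simp add: sh_def)
lemma sh_Nil[simp]: "sh c [] = []"
  by (simp add: sh_def)
lemma sh_sh[simp]: "sh a (sh b xs) = sh (b + a) xs"
  by (induction xs) (auto simp: sh_def)
lemma length_sh[simp]: "length (sh c xs) = length xs"
  by (simp add: sh_def)
lemma nth_sh: "i < length xs \<Longrightarrow> sh c xs ! i = (fst (xs!i) + c, snd (xs!i))"
  by (simp add: sh_def split: prod.splits)

fun lb0 :: "bintree \<Rightarrow> (int \<times> bool) list" where
  "lb0 Leaf = []"
| "lb0 (Node a b) = sh 1 (lb0 a) @ [(0, b = Leaf)] @ sh 2 (lb0 b)"

fun labA :: "(nat \<Rightarrow> int) \<Rightarrow> (nat \<Rightarrow> int) \<Rightarrow> nat \<Rightarrow> bintree \<Rightarrow> (int \<times> bool) list" where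
  "labA g h j Leaf = []"
| "labA g h j (Node a b) = sh (1 + g j) (lb0 a) @ [(h j, b = Leaf)] @ labA g h (Suc j) b"

lemma length_lb0[simp]: "length (lb0 t) = nodes t"
  by (induction t) auto
lemma length_labA[simp]: "length (labA g h j t) = nodes t"
  by (induction t arbitrary: j) auto

definition stepR :: "nat set \<Rightarrow> (nat \<Rightarrow> int) \<Rightarrow> (nat \<Rightarrow> int) \<Rightarrow> (int \<times> bool) list \<Rightarrow> (int \<times> bool) list \<Rightarrow> bool" where
  "stepR S g h xs ys \<longleftrightarrow> length xs = length ys \<and>
    (\<forall>i<length xs. \<bar>fst (xs!i) - fst (ys!i)\<bar> \<le> 1 \<and> (snd (ys!i) \<longrightarrow> snd (xs!i)) \<and>
      (snd (xs!i) \<and> \<not> snd (ys!i) \<longrightarrow>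
        (\<exists>K\<in>S. fst (xs!i) = g K + 1 \<and> Suc i < length xs \<and> fst (ys!Suc i) = h (Suc K))))"

lemma stepR_append:
  assumes A1: "stepR S g h xs1 ys1" and A2: "stepR S g h xs2 ys2"
  shows "stepR S g h (xs1 @ xs2) (ys1 @ ys2)"
proof -
  have l1: "length xs1 = length ys1" and l2: "length xs2 = length ys2" using assms by (auto simp: stepR_def)
  have P: "\<bar>fst ((xs1 @ xs2) ! i) - fst ((ys1 @ ys2) ! i)\<bar> \<le> 1 \<and> (snd ((ys1 @ ys2) ! i) \<longrightarrow> snd ((xs1 @ xs2) ! i)) \<and>
    (snd ((xs1 @ xs2) ! i) \<and> \<not> snd ((ys1 @ ys2) ! i) \<longrightarrow>
    (\<exists>K\<in>S. fst ((xs1 @ xs2) ! i) = g K + 1 \<and> Suc i < length (xs1 @ xs2) \<and> fst ((ys1 @ ys2) ! Suc i) = h (Suc K)))"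
    if i: "i < length (xs1 @ xs2)" for i
  proof (cases "i < length xs1")
    case True
    then show ?thesis using A1 l1 l2 unfolding stepR_def
      by (auto simp: nth_append)
  next
    case False
    then obtain i' where i': "i = length xs1 + i'" by (metis le_iff_add not_less)
    have "i' < length xs2" using i i' by simp
    then show ?thesis using A2 l1 l2 i' unfolding stepR_def
      by (auto simp: nth_append)
  qed
  show ?thesis unfolding stepR_def using l1 l2 P by simp
qed

lemma stepR_refl: "stepR S g h xs xs"
  by (simp add: stepR_def)

lemma stepR_sh: "\<bar>a - b\<bar> \<le> 1 \<Longrightarrow> stepR S g h (sh a xs) (sh b xs)"
  by (auto simp: stepR_def nth_sh)

lemma stepR_single: "\<bar>a - b\<bar> \<le> 1 \<Longrightarrow> stepR S g h [(a, f)] [(b, f)]"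
  by (auto simp: stepR_def)

lemma stepR_pair:
  assumes "K \<in> S" "\<bar>g K + 1 - h K\<bar> \<le> 1" "\<bar>h K - h (Suc K)\<bar> \<le> 1"
  shows "stepR S g h [(g K + 1, True), (h K, f)] [(h K, False), (h (Suc K), f)]"
  using assms unfolding stepR_def
  by (auto simp: less_Suc_eq)

lemma at_arm_rr_nonleaf: "at_arm k rot_right t = Some t' \<Longrightarrow> t \<noteq> Leaf \<and> t' \<noteq> Leaf"
proof (induction k arbitrary: t t')
  case 0
  then show ?case by (cases t rule: rot_right.cases) auto
next
  case (Suc k)
  then show ?case by (cases t) auto
qed

lemma at_arm_left_right: "at_arm k rot_left t = Some t' \<Longrightarrow> at_arm k rot_right t' = Some t"
proof (induction k arbitrary: t t')
  case 0
  then show ?case by (cases t rule: rot_left.cases) auto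
next
  case (Suc k)
  then show ?case by (cases t) auto
qed

lemma at_arm_right_left: "at_arm k rot_right t = Some t' \<Longrightarrow> at_arm k rot_left t' = Some t"
proof (induction k arbitrary: t t')
  case 0
  then show ?case by (cases t rule: rot_right.cases) auto
next
  case (Suc k)
  then show ?case by (cases t) auto
qed

definition mk :: "bintree list \<Rightarrow> bintree" where "mk Ls = foldr Node Ls Leaf"

fun lsp :: "nat \<Rightarrow> bintree" where
  "lsp 0 = Leaf"
| "lsp (Suc k) = Node (lsp k) Leaf"

fun chain :: "nat \<Rightarrow> bintree \<Rightarrow> bintree" where
  "chain 0 X = X"
| "chain (Suc k) X = Node Leaf (chain k X)"

lemma at_arm_foldr: "at_arm (length pre) f (foldr Node pre t) = map_option (foldr Node pre) (f t)"
  by (induction pre) (auto simp: option.map_comp comp_def option.map_ident)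

lemma split_step:
  assumes "length pre = k" "k \<in> S"
  shows "rra_step S (mk (pre @ Node A B # Ls)) (mk (pre @ A # B # Ls))"
proof -
  have "at_arm k rot_right (mk (pre @ Node A B # Ls)) = Some (mk (pre @ A # B # Ls))"
    using at_arm_foldr[of pre rot_right "foldr Node (Node A B # Ls) Leaf"] assms(1)
    by (simp add: mk_def)
  then show ?thesis using assms(2) unfolding rra_step_def by blast
qed

lemma merge_step:
  assumes "0 \<in> S"
  shows "rra_step S (mk (A # B # Ls)) (mk (Node A B # Ls))"
proof -
  have "at_arm 0 rot_left (mk (A # B # Ls)) = Some (mk (Node A B # Ls))"
    by (simp add: mk_def)
  then show ?thesis using assms unfolding rra_step_def by blast
qed

lemma split0_step:
  assumes "0 \<in> S"
  shows "rra_step S (mk (Node A B # Ls)) (mk (A # B # Ls))"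
  using split_step[of "[]" 0 S A B Ls] assms by simp

lemma rra_step_sym: "rra_step S t t' \<Longrightarrow> rra_step S t' t"
  unfolding rra_step_def using at_arm_left_right at_arm_right_left by blast

lemma phase1: "0 \<in> S \<Longrightarrow> (rra_step S)\<^sup>*\<^sup>* (mk (lsp k # replicate r Leaf @ [C])) (mk (replicate (k + r + 1) Leaf @ [C]))"
proof (induction k arbitrary: r)
  case 0
  then show ?case by simp
next
  case (Suc k)
  have "rra_step S (mk (lsp (Suc k) # replicate r Leaf @ [C])) (mk (lsp k # replicate (Suc r) Leaf @ [C]))"
    using split0_step[OF Suc.prems, of "lsp k" Leaf "replicate r Leaf @ [C]"] by simp
  moreover have "(rra_step S)\<^sup>*\<^sup>* (mk (lsp k # replicate (Suc r) Leaf @ [C])) (mk (replicate (k + Suc r + 1) Leaf @ [C]))"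
    using Suc.IH[OF Suc.prems] .
  ultimately show ?case by (simp add: converse_rtranclp_into_rtranclp)
qed

lemma phase2:
  assumes "0 \<in> S" "p \<in> S" "1 \<le> p"
  shows "(rra_step S)\<^sup>*\<^sup>* (mk (lsp t # replicate (p - 1) Leaf @ [chain k X])) (mk (lsp (t + k) # replicate (p - 1) Leaf @ [X]))"
proof (induction k arbitrary: t)
  case 0
  then show ?case by simp
next
  case (Suc k)
  have e1: "lsp t # replicate (p - 1) Leaf @ [chain (Suc k) X] = (lsp t # replicate (p - 1) Leaf) @ Node Leaf (chain k X) # []"
    by simp
  have s1: "rra_step S (mk (lsp t # replicate (p - 1) Leaf @ [chain (Suc k) X]))
      (mk ((lsp t # replicate (p - 1) Leaf) @ Leaf # chain k X # []))"
    unfolding e1 using split_step[of "lsp t # replicate (p - 1) Leaf" p S Leaf "chain k X" "[]"] assms by simp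
  have e2: "(lsp t # replicate (p - 1) Leaf) @ Leaf # chain k X # [] = lsp t # Leaf # (replicate (p - 1) Leaf @ [chain k X])"
    by (simp add: replicate_app_Cons_same)
  have s2: "rra_step S (mk (lsp t # Leaf # (replicate (p - 1) Leaf @ [chain k X]))) (mk (lsp (Suc t) # replicate (p - 1) Leaf @ [chain k X]))"
    using merge_step[OF assms(1)] by simp
  have "(rra_step S)\<^sup>*\<^sup>* (mk (lsp (Suc t) # replicate (p - 1) Leaf @ [chain k X])) (mk (lsp (Suc t + k) # replicate (p - 1) Leaf @ [X]))"
    using Suc.IH .
  then have C: "(rra_step S)\<^sup>*\<^sup>* (mk (lsp (Suc t) # replicate (p - 1) Leaf @ [chain k X])) (mk (lsp (t + Suc k) # replicate (p - 1) Leaf @ [X]))"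
    by simp
  have s1': "rra_step S (mk (lsp t # replicate (p - 1) Leaf @ [chain (Suc k) X]))
      (mk (lsp t # Leaf # (replicate (p - 1) Leaf @ [chain k X])))"
    using s1 e2 by metis
  show ?case using converse_rtranclp_into_rtranclp[OF s1' converse_rtranclp_into_rtranclp[OF s2 C]] .
qed

locale pot =
  fixes S :: "nat set" and g h :: "nat \<Rightarrow> int"
  assumes G1: "\<And>K. K \<in> S \<Longrightarrow> 1 \<le> g (Suc K) - g K \<and> g (Suc K) - g K \<le> 3"
    and G2: "\<And>j. 1 \<le> j \<Longrightarrow> \<bar>g (Suc j) - g j\<bar> \<le> 1"
    and H1: "\<And>K. K \<in> S \<Longrightarrow> \<bar>g K + 1 - h K\<bar> \<le> 1"
    and H2: "\<And>j. \<bar>h j - h (Suc j)\<bar> \<le> 1"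
begin

lemma labA_shift: "1 \<le> j \<Longrightarrow> stepR S g h (labA g h j C) (labA g h (Suc j) C)"
proof (induction C arbitrary: j)
  case Leaf
  then show ?case by (simp add: stepR_refl)
next
  case (Node a b)
  have 1: "stepR S g h (sh (1 + g j) (lb0 a)) (sh (1 + g (Suc j)) (lb0 a))"
    using G2[OF Node.prems] by (intro stepR_sh) simp
  have 2: "stepR S g h [(h j, b = Leaf)] [(h (Suc j), b = Leaf)]"
    using H2[of j] by (intro stepR_single) simp
  have 3: "stepR S g h (labA g h (Suc j) b) (labA g h (Suc (Suc j)) b)"
    using Node.IH(2)[of "Suc j"] by simp
  show ?case using stepR_append[OF 1 stepR_append[OF 2 3]] by simp
qed

lemma rot_step: "at_arm k rot_right t = Some t' \<Longrightarrow> j + k \<in> S \<Longrightarrow> stepR S g h (labA g h j t) (labA g h j t')"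
proof (induction k arbitrary: j t t')
  case 0
  then obtain A B C where t: "t = Node (Node A B) C" and t': "t' = Node A (Node B C)"
    by (cases t rule: rot_right.cases) auto
  have jS: "j \<in> S" using 0 by simp
  have pA: "stepR S g h (sh (1 + (1 + g j)) (lb0 A)) (sh (1 + g j) (lb0 A))"
    by (intro stepR_sh) simp
  have pC: "stepR S g h (labA g h (Suc j) C) (labA g h (Suc (Suc j)) C)"
    by (intro labA_shift) simp
  show ?case
  proof (cases "B = Leaf")
    case True
    have pM: "stepR S g h [(g j + 1, True), (h j, C = Leaf)] [(h j, False), (h (Suc j), C = Leaf)]"
      using H1[OF jS] H2[of j] by (intro stepR_pair jS)
    have "stepR S g h (sh (1 + (1 + g j)) (lb0 A) @ [(g j + 1, True), (h j, C = Leaf)] @ labA g h (Suc j) C)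
       (sh (1 + g j) (lb0 A) @ [(h j, False), (h (Suc j), C = Leaf)] @ labA g h (Suc (Suc j)) C)"
      by (intro stepR_append pA pM pC)
    then show ?thesis using t t' True by (simp add: add.commute)
  next
    case False
    have pM: "stepR S g h [(1 + g j, False)] [(h j, False)]"
      using H1[OF jS] by (intro stepR_single) simp
    have pB: "stepR S g h (sh (2 + (1 + g j)) (lb0 B)) (sh (1 + g (Suc j)) (lb0 B))"
      using G1[OF jS] by (intro stepR_sh) (simp add: abs_if)
    have pN: "stepR S g h [(h j, C = Leaf)] [(h (Suc j), C = Leaf)]"
      using H2[of j] by (intro stepR_single) simp
    have "stepR S g h (sh (1 + (1 + g j)) (lb0 A) @ [(1 + g j, False)] @ sh (2 + (1 + g j)) (lb0 B) @ [(h j, C = Leaf)] @ labA g h (Suc j) C)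
       (sh (1 + g j) (lb0 A) @ [(h j, False)] @ sh (1 + g (Suc j)) (lb0 B) @ [(h (Suc j), C = Leaf)] @ labA g h (Suc (Suc j)) C)"
      by (intro stepR_append pA pM pB pN pC)
    then show ?thesis using t t' False by simp
  qed
next
  case (Suc k)
  then obtain l r r' where t: "t = Node l r" and t': "t' = Node l r'" and r: "at_arm k rot_right r = Some r'"
    by (cases t) auto
  have nl: "r \<noteq> Leaf" "r' \<noteq> Leaf" using at_arm_rr_nonleaf[OF r] by auto
  have "stepR S g h (labA g h (Suc j) r) (labA g h (Suc j) r')"
    using Suc.IH[OF r] Suc.prems(2) by simp
  then have "stepR S g h (sh (1 + g j) (lb0 l) @ [(h j, False)] @ labA g h (Suc j) r)
      (sh (1 + g j) (lb0 l) @ [(h j, False)] @ labA g h (Suc j) r')"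
    by (intro stepR_append stepR_refl)
  then show ?case using t t' nl by simp
qed


abbreviation L where "L t \<equiv> labA g h 0 t"

lemma step_props:
  assumes "rra_step S t t'"
  shows "length (L t) = length (L t') \<and> (\<forall>i<length (L t). \<bar>fst (L t ! i) - fst (L t' ! i)\<bar> \<le> 1 \<and>
     (snd (L t ! i) \<and> \<not> snd (L t' ! i) \<longrightarrow>
       (\<exists>K\<in>S. fst (L t ! i) = g K + 1 \<and> Suc i < length (L t) \<and> fst (L t' ! Suc i) = h (Suc K))))"
proof -
  obtain k where kS: "k \<in> S" and k: "at_arm k rot_right t = Some t' \<or> at_arm k rot_left t = Some t'"
    using assms unfolding rra_step_def by blast
  show ?thesis
  proof (cases "at_arm k rot_right t = Some t'")
    case True
    have "stepR S g h (L t) (L t')" using rot_step[OF True] kS by simp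
    then show ?thesis unfolding stepR_def by auto
  next
    case False
    then have "at_arm k rot_left t = Some t'" using k by simp
    then have "at_arm k rot_right t' = Some t" by (rule at_arm_left_right)
    then have st: "stepR S g h (L t') (L t)" using rot_step kS by simp
    then show ?thesis unfolding stepR_def by (auto simp: abs_minus_commute)
  qed
qed

lemma path_close:
  "(rra_step S ^^ s) t u \<Longrightarrow> length (L t) = length (L u) \<and> (\<forall>i<length (L t). \<bar>fst (L t ! i) - fst (L u ! i)\<bar> \<le> int s)"
proof (induction s arbitrary: u)
  case 0
  then show ?case by simp
next
  case (Suc s)
  from Suc.prems obtain v where p: "(rra_step S ^^ s) t v" and st: "rra_step S v u"
    by (auto elim: relpowp_Suc_E)
  have IH: "length (L t) = length (L v) \<and> (\<forall>i<length (L t). \<bar>fst (L t ! i) - fst (L v ! i)\<bar> \<le> int s)"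
    using Suc.IH[OF p] .
  have S1: "length (L v) = length (L u) \<and> (\<forall>i<length (L v). \<bar>fst (L v ! i) - fst (L u ! i)\<bar> \<le> 1)"
    using step_props[OF st] by auto
  show ?case
  proof (intro conjI allI impI)
    show "length (L t) = length (L u)" using IH S1 by simp
    fix i assume i: "i < length (L t)"
    have a: "\<bar>fst (L t ! i) - fst (L v ! i)\<bar> \<le> int s" using IH i by blast
    have b: "\<bar>fst (L v ! i) - fst (L u ! i)\<bar> \<le> 1" using S1 IH i by auto
    show "\<bar>fst (L t ! i) - fst (L u ! i)\<bar> \<le> int (Suc s)" using a b by (simp add: abs_if split: if_splits)
  qed
qed

lemma flip_path:
  assumes Mb: "\<And>K. K \<in> S \<Longrightarrow> g K + h (Suc K) \<le> Mb"
  shows "(rra_step S ^^ s) t u \<Longrightarrow> snd (L t ! x) \<Longrightarrow> \<not> snd (L u ! x) \<Longrightarrow> Suc x < length (L t) \<Longrightarrow>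
    fst (L t ! x) + fst (L u ! Suc x) - Mb \<le> int s"
proof (induction s arbitrary: u)
  case 0
  then show ?case by simp
next
  case (Suc s)
  from Suc.prems obtain v where p: "(rra_step S ^^ s) t v" and st: "rra_step S v u"
    by (auto elim: relpowp_Suc_E)
  have lv: "length (L t) = length (L v)" using path_close[OF p] by simp
  have SP: "length (L v) = length (L u) \<and> (\<forall>i<length (L v). \<bar>fst (L v ! i) - fst (L u ! i)\<bar> \<le> 1 \<and>
     (snd (L v ! i) \<and> \<not> snd (L u ! i) \<longrightarrow>
       (\<exists>K\<in>S. fst (L v ! i) = g K + 1 \<and> Suc i < length (L v) \<and> fst (L u ! Suc i) = h (Suc K))))"
    using step_props[OF st] .
  show ?case
  proof (cases "snd (L v ! x)")
    case True
    have xl: "x < length (L v)" using Suc.prems(4) lv by simp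
    have "\<exists>K\<in>S. fst (L v ! x) = g K + 1 \<and> Suc x < length (L v) \<and> fst (L u ! Suc x) = h (Suc K)"
      using SP xl True Suc.prems(3) by blast
    then obtain K where K: "K \<in> S" "fst (L v ! x) = g K + 1" "fst (L u ! Suc x) = h (Suc K)"
      by blast
    have "\<bar>fst (L t ! x) - fst (L v ! x)\<bar> \<le> int s" using path_close[OF p] Suc.prems by auto
    then show ?thesis using K Mb[OF K(1)] by (simp add: abs_if split: if_splits)
  next
    case False
    have a: "fst (L t ! x) + fst (L v ! Suc x) - Mb \<le> int s" using Suc.IH[OF p Suc.prems(2) False Suc.prems(4)] .
    have b: "\<bar>fst (L v ! Suc x) - fst (L u ! Suc x)\<bar> \<le> 1" using SP lv Suc.prems by auto
    show ?thesis using a b by (simp add: abs_if split: if_splits)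
  qed
qed

end


definition X1 :: bintree where "X1 = Node (Node Leaf Leaf) Leaf"
definition X2 :: bintree where "X2 = Node Leaf (Node Leaf Leaf)"
definition TT :: "nat \<Rightarrow> nat \<Rightarrow> bintree \<Rightarrow> bintree" where
  "TT q d X = mk [Node (lsp q) (chain d X)]"

lemma nodes_lsp[simp]: "nodes (lsp q) = q"
  by (induction q) auto
lemma nodes_chain[simp]: "nodes (chain d X) = d + nodes X"
  by (induction d) auto
lemma nodes_TT: "nodes (TT q d X1) = q + d + 4" "nodes (TT q d X2) = q + d + 4"
  by (auto simp: TT_def mk_def X1_def X2_def)

lemma reach_common:
  assumes "0 \<in> S" "Suc q \<in> S" "X = X1 \<or> X = X2"
  shows "(rra_step S)\<^sup>*\<^sup>* (TT q d X) (mk (lsp (Suc (Suc d)) # replicate (Suc q) Leaf))"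
proof -
  have a: "rra_step S (TT q d X) (mk (lsp q # replicate 0 Leaf @ [chain d X]))"
    unfolding TT_def using split0_step[OF assms(1), of "lsp q" "chain d X" "[]"] by simp
  have b: "(rra_step S)\<^sup>*\<^sup>* (mk (lsp q # replicate 0 Leaf @ [chain d X])) (mk (replicate (q + 0 + 1) Leaf @ [chain d X]))"
    by (rule phase1[OF assms(1)])
  have e: "replicate (q + 0 + 1) Leaf @ [chain d X] = lsp 0 # replicate (Suc q - 1) Leaf @ [chain d X]"
    by simp
  have c: "(rra_step S)\<^sup>*\<^sup>* (mk (lsp 0 # replicate (Suc q - 1) Leaf @ [chain d X])) (mk (lsp (0 + d) # replicate (Suc q - 1) Leaf @ [X]))"
    using phase2[where p="Suc q" and t=0 and k=d and X=X and S=S] assms by simp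
  have abc: "(rra_step S)\<^sup>*\<^sup>* (TT q d X) (mk (lsp d # replicate q Leaf @ [X]))"
    using a b c e by (metis (no_types, lifting) converse_rtranclp_into_rtranclp rtranclp_trans diff_Suc_1 add_0)
  show ?thesis
  proof (cases "X = X1")
    case True
    have s1: "rra_step S (mk ((lsp d # replicate q Leaf) @ Node (Node Leaf Leaf) Leaf # []))
        (mk ((lsp d # replicate q Leaf) @ Node Leaf Leaf # Leaf # []))"
      by (rule split_step[where k="Suc q"]) (use assms in auto)
    have s2: "rra_step S (mk ((lsp d # replicate q Leaf) @ Node Leaf Leaf # [Leaf]))
        (mk ((lsp d # replicate q Leaf) @ Leaf # Leaf # [Leaf]))"
      by (rule split_step[where k="Suc q"]) (use assms in auto)
    have e3: "(lsp d # replicate q Leaf) @ Leaf # Leaf # [Leaf] = lsp d # Leaf # (replicate q Leaf @ [Leaf, Leaf])"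
      by (simp add: replicate_app_Cons_same)
    have s3: "rra_step S (mk (lsp d # Leaf # (replicate q Leaf @ [Leaf, Leaf]))) (mk (lsp (Suc d) # (replicate q Leaf @ [Leaf, Leaf])))"
      using merge_step[OF assms(1)] by simp
    have e4: "replicate q Leaf @ [Leaf, Leaf] = Leaf # replicate (Suc q) Leaf"
      by (simp add: replicate_app_Cons_same)
    have s4: "rra_step S (mk (lsp (Suc d) # Leaf # replicate (Suc q) Leaf)) (mk (lsp (Suc (Suc d)) # replicate (Suc q) Leaf))"
      using merge_step[OF assms(1)] by simp
    have x: "mk (lsp d # replicate q Leaf @ [X]) = mk ((lsp d # replicate q Leaf) @ Node (Node Leaf Leaf) Leaf # [])"
      using True by (simp add: X1_def)
    show ?thesis
      using abc x s1 s2 e3 s3 e4 s4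
      by (metis (no_types, lifting) rtranclp.rtrancl_into_rtrancl)
  next
    case False
    then have X: "X = X2" using assms by auto
    have c2: "(rra_step S)\<^sup>*\<^sup>* (mk (lsp d # replicate (Suc q - 1) Leaf @ [chain 2 Leaf])) (mk (lsp (d + 2) # replicate (Suc q - 1) Leaf @ [Leaf]))"
      using phase2[where p="Suc q" and t=d and k=2 and X=Leaf and S=S] assms by simp
    have "chain 2 Leaf = X2" by (simp add: X2_def numeral_2_eq_2)
    then have "(rra_step S)\<^sup>*\<^sup>* (mk (lsp d # replicate q Leaf @ [X])) (mk (lsp (Suc (Suc d)) # replicate (Suc q) Leaf))"
      using c2 X by (simp add: replicate_app_Cons_same)
    then show ?thesis using abc by (metis rtranclp_trans)
  qed
qed

lemma chain_Node[simp]: "chain d (Node a b) \<noteq> Leaf"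
  by (cases d) auto

lemma lb0_chain: "\<exists>P. length P = d \<and> lb0 (chain d X) = P @ sh (2 * int d) (lb0 X)"
proof (induction d)
  case 0
  then show ?case by (simp add: sh_def)
next
  case (Suc d)
  then obtain P where "length P = d" "lb0 (chain d X) = P @ sh (2 * int d) (lb0 X)" by blast
  then show ?case
    by (intro exI[of _ "(0, chain d X = Leaf) # sh 2 P"]) (simp add: add.commute)
qed

lemma lab_TT1: "\<exists>Q R. length Q = q + 1 + d \<and> labA g h 0 (TT q d X1) = Q @ (2 * int d + 4 + g 0, True) # (2 * int d + 3 + g 0, True) # R"
proof -
  obtain P where P: "length P = d" "lb0 (chain d X1) = P @ sh (2 * int d) (lb0 X1)" using lb0_chain by blast
  have "labA g h 0 (TT q d X1) = (sh (1 + g 0) (sh 1 (lb0 (lsp q))) @ [(1 + g 0, False)] @ sh (1 + g 0) (sh 2 P)) @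
      (2 * int d + 4 + g 0, True) # (2 * int d + 3 + g 0, True) # [(h 0, True)]"
    using P by (simp add: TT_def mk_def X1_def algebra_simps)
  then show ?thesis
    by (intro exI[of _ "sh (1 + g 0) (sh 1 (lb0 (lsp q))) @ [(1 + g 0, False)] @ sh (1 + g 0) (sh 2 P)"] exI[of _ "[(h 0, True)]"])
      (use P(1) in simp)
qed

lemma lab_TT2: "\<exists>Q R. length Q = q + 1 + d \<and> labA g h 0 (TT q d X2) = Q @ (2 * int d + 3 + g 0, False) # (2 * int d + 5 + g 0, True) # R"
proof -
  obtain P where P: "length P = d" "lb0 (chain d X2) = P @ sh (2 * int d) (lb0 X2)" using lb0_chain by blast
  have "labA g h 0 (TT q d X2) = (sh (1 + g 0) (sh 1 (lb0 (lsp q))) @ [(1 + g 0, False)] @ sh (1 + g 0) (sh 2 P)) @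
      (2 * int d + 3 + g 0, False) # (2 * int d + 5 + g 0, True) # [(h 0, True)]"
    using P by (simp add: TT_def mk_def X2_def algebra_simps)
  then show ?thesis
    by (intro exI[of _ "sh (1 + g 0) (sh 1 (lb0 (lsp q))) @ [(1 + g 0, False)] @ sh (1 + g 0) (sh 2 P)"] exI[of _ "[(h 0, True)]"])
      (use P(1) in simp)
qed


definition gf :: "nat \<Rightarrow> nat \<Rightarrow> int" where
  "gf p j = (if j = 0 then 0 else \<bar>int j - int p\<bar> + 2 - int p)"
definition hf :: "nat \<Rightarrow> nat \<Rightarrow> nat \<Rightarrow> int" where
  "hf p m j = (if j \<le> m then gf p j else gf p m - (int j - int m))"

lemma pot_inst:
  assumes "1 \<le> p" "p \<le> m" "\<And>k. k \<in> S \<Longrightarrow> k = 0 \<or> (p \<le> k \<and> k \<le> m)"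
  shows "pot S (gf p) (hf p m)"
proof
  fix K assume K: "K \<in> S"
  show "1 \<le> gf p (Suc K) - gf p K \<and> gf p (Suc K) - gf p K \<le> 3"
    using assms(1) assms(3)[OF K] by (auto simp: gf_def)
  show "\<bar>gf p K + 1 - hf p m K\<bar> \<le> 1"
    using assms(3)[OF K] assms(2) by (auto simp: hf_def)
next
  fix j :: nat assume "1 \<le> j"
  then show "\<bar>gf p (Suc j) - gf p j\<bar> \<le> 1" by (auto simp: gf_def)
next
  fix j
  show "\<bar>hf p m j - hf p m (Suc j)\<bar> \<le> 1"
    using assms(1,2) by (auto simp: hf_def gf_def)
qed

lemma Mb_inst:
  assumes "1 \<le> p" "p \<le> m" "\<And>k. k \<in> S \<Longrightarrow> k = 0 \<or> (p \<le> k \<and> k \<le> m)" "K \<in> S"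
  shows "gf p K + hf p m (Suc K) \<le> 4 * int m - 4 * int p + 1"
  using assms(1,2) assms(3)[OF assms(4)] by (auto simp: hf_def gf_def)

lemma sorted_bounds:
  "sorted_wrt (<) xs \<Longrightarrow> xs \<noteq> [] \<Longrightarrow> k \<in> set xs \<Longrightarrow> hd xs \<le> k \<and> k \<le> last (xs::nat list)"
proof (induction xs)
  case Nil
  then show ?case by simp
next
  case (Cons a xs)
  show ?case
  proof (cases "xs = []")
    case True
    then show ?thesis using Cons by simp
  next
    case False
    have "last xs \<in> set xs" using False by simp
    then have "a < last xs" using Cons.prems(1) by simp
    have sx: "sorted_wrt (<) xs" and ax: "\<forall>y\<in>set xs. a < y" using Cons.prems(1) by auto
    show ?thesis
    proof (cases "k = a")
      case True
      then show ?thesis using \<open>a < last xs\<close> False by simp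
    next
      case False2: False
      then have "k \<in> set xs" using Cons.prems(3) by simp
      then show ?thesis using Cons.IH[OF sx False] ax False by auto
    qed
  qed
qed

lemma rtranclp_sym_rra: "(rra_step S)\<^sup>*\<^sup>* a b \<Longrightarrow> (rra_step S)\<^sup>*\<^sup>* b a"
  by (induction rule: rtranclp_induct) (auto intro: converse_rtranclp_into_rtranclp rra_step_sym)

theorem theorem3p9:
  fixes ii :: "nat list" and n :: nat
  assumes "ii \<noteq> []"
    and "sorted_wrt (<) ii"
    and "0 < hd ii"
    and "n > last ii + 4"
  shows "\<exists>T1 T2. nodes T1 = n \<and> nodes T2 = n
           \<and> rra_defined (insert 0 (set ii)) T1 T2
           \<and> d_RRA (insert 0 (set ii)) T1 T2 \<ge> 4 * n - 4 * last ii - 4"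
proof -
  define p where "p = hd ii"
  define m where "m = last ii"
  define S where "S = insert 0 (set ii)"
  define q where "q = p - 1"
  define d where "d = n - p - 3"
  have p1: "1 \<le> p" using assms(3) p_def by simp
  have Sb: "\<And>k. k \<in> S \<Longrightarrow> k = 0 \<or> (p \<le> k \<and> k \<le> m)"
    using sorted_bounds[OF assms(2) assms(1)] unfolding S_def p_def m_def by auto
  have pS: "p \<in> S" using assms(1) unfolding S_def p_def by (simp add: hd_in_set)
  have pm: "p \<le> m" using Sb[OF pS] p1 by auto
  have nb: "n > m + 4" using assms(4) m_def by simp
  have qS: "Suc q \<in> S" using pS p1 q_def by simp
  have S0: "0 \<in> S" using S_def by simp
  have nodes1: "nodes (TT q d X1) = n" and nodes2: "nodes (TT q d X2) = n"
    using nodes_TT[of q d] p1 pm nb q_def d_def by auto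
  have r1: "(rra_step S)\<^sup>*\<^sup>* (TT q d X1) (mk (lsp (Suc (Suc d)) # replicate (Suc q) Leaf))"
    using reach_common[OF S0 qS] by simp
  have r2: "(rra_step S)\<^sup>*\<^sup>* (TT q d X2) (mk (lsp (Suc (Suc d)) # replicate (Suc q) Leaf))"
    using reach_common[OF S0 qS] by simp
  have r: "(rra_step S)\<^sup>*\<^sup>* (TT q d X1) (TT q d X2)"
    using r1 rtranclp_sym_rra[OF r2] by (rule rtranclp_trans)
  have def: "rra_defined S (TT q d X1) (TT q d X2)"
    unfolding rra_defined_def using rtranclp_imp_relpowp[OF r] .
  have path: "(rra_step S ^^ d_RRA S (TT q d X1) (TT q d X2)) (TT q d X1) (TT q d X2)"
    unfolding d_RRA_def using def unfolding rra_defined_def by (rule LeastI_ex)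
  interpret P: pot S "gf p" "hf p m" by (rule pot_inst[OF p1 pm Sb])
  obtain Q1 R1 where Q1: "length Q1 = q + 1 + d" and L1: "labA (gf p) (hf p m) 0 (TT q d X1) =
      Q1 @ (2 * int d + 4 + gf p 0, True) # (2 * int d + 3 + gf p 0, True) # R1"
    using lab_TT1 by blast
  obtain Q2 R2 where Q2: "length Q2 = q + 1 + d" and L2: "labA (gf p) (hf p m) 0 (TT q d X2) =
      Q2 @ (2 * int d + 3 + gf p 0, False) # (2 * int d + 5 + gf p 0, True) # R2"
    using lab_TT2 by blast
  have len: "Suc (q + 1 + d) < length (labA (gf p) (hf p m) 0 (TT q d X1))"
    using nodes1 p1 pm nb q_def d_def by simp
  have "fst (labA (gf p) (hf p m) 0 (TT q d X1) ! (q + 1 + d)) + fst (labA (gf p) (hf p m) 0 (TT q d X2) ! Suc (q + 1 + d))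
      - (4 * int m - 4 * int p + 1) \<le> int (d_RRA S (TT q d X1) (TT q d X2))"
    using P.flip_path[OF Mb_inst[OF p1 pm Sb] path _ _ len] L1 L2 Q1 Q2
    by (simp add: nth_append)
  then have "2 * int d + 4 + (2 * int d + 5) - (4 * int m - 4 * int p + 1) \<le> int (d_RRA S (TT q d X1) (TT q d X2))"
    using L1 L2 Q1 Q2 by (simp add: nth_append gf_def)
  moreover have "int d = int n - int p - 3" using d_def pm nb by simp
  ultimately have "int (4 * n - 4 * m - 4) \<le> int (d_RRA S (TT q d X1) (TT q d X2))"
    using nb by simp
  then have "4 * n - 4 * m - 4 \<le> d_RRA S (TT q d X1) (TT q d X2)" by simp
  then show ?thesis using nodes1 nodes2 def unfolding S_def m_def by blast
qed

end
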